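(* Let $n\ge1$ and define automorphisms $a,b,c,d_1,\dots,d_n$ of the binary rooted tree $\mathcal{T}_2$ (vertex set the finite words over $\{0,1\}$) recursively by the wreath recursions $a=(0~1)(c,b)$, $b=(0~1)(b,c)$, $c=\sigma_0(d_1,d_1)$, $d_i=\sigma_i(d_{i+1},d_{i+1})$ for $1\le i\le n-1$, $d_n=\sigma_n(a,a)$, where $\sigma_1=(0~1)$ and $\sigma_i=\mathrm{id}$ for all $i\neq1$ (including $\sigma_0$). Then $a$ acts transitively on each level of $\mathcal{T}_2$ (i.e. on the set of words of length $m$, for every $m\ge0$).
   Context: The wreath recursion $f=\pi(f_0,f_1)$ (with $\pi\in S_2$ a permutation of $\{0,1\}$ and $f_0,f_1\in\mathrm{Aut}(\mathcal{T}_2)$) means $f(xw)=\pi(x)\,f_x(w)$ for $x\in\{0,1\}$ and words $w$. *)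

theory Defs
  imports Main
begin

text \<open>Letters: 0 is False, 1 is True. Vertices of the binary tree are bool lists.
  The states of the automaton: SA = a, SB = b, SC = c, SD i = d_i (1 <= i <= n).\<close>

datatype st = SA | SB | SC | SD nat

text \<open>Root permutation: True means the transposition (0 1).
  a and b have (0 1); c has sigma_0 = id; d_i has sigma_i, which is (0 1) iff i = 1.\<close>
fun swaps :: "st \<Rightarrow> bool" where
  "swaps SA = True"
| "swaps SB = True"
| "swaps SC = False"
| "swaps (SD i) = (i = 1)"

fun sect :: "nat \<Rightarrow> st \<Rightarrow> bool \<Rightarrow> st" where
  "sect n SA x = (if x then SB else SC)"
| "sect n SB x = (if x then SC else SB)"
| "sect n SC x = SD 1"
| "sect n (SD i) x = (if i < n then SD (Suc i) else SA)"

fun act :: "nat \<Rightarrow> st \<Rightarrow> bool list \<Rightarrow> bool list" where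
  "act n s [] = []"
| "act n s (x # w) = (if swaps s then \<not> x else x) # act n (sect n s x) w"

end

theory Submission
  imports Defs
begin

fun stt :: "nat \<Rightarrow> st \<Rightarrow> bool list \<Rightarrow> st" where
  "stt n s [] = s"
| "stt n s (x # w) = stt n (sect n s x) w"

fun fc :: "nat \<Rightarrow> nat \<Rightarrow> st \<Rightarrow> nat" where
  "fc n 0 s = (if swaps s then 1 else 0)"
| "fc n (Suc m) s = fc n m (sect n s False) + fc n m (sect n s True)"

lemma length_act[simp]: "length (act n s w) = length w"
  by (induction w arbitrary: s) auto

lemma length_pow[simp]: "length ((act n s ^^ k) w) = length w"
  by (induction k) auto

lemma act_snoc: "act n s (p @ [x]) = act n s p @ [if swaps (stt n s p) then \<not> x else x]"
  by (induction p arbitrary: s) auto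

definition cnt :: "nat \<Rightarrow> nat \<Rightarrow> bool list \<Rightarrow> nat" where
  "cnt n k p = (\<Sum>i<k. if swaps (stt n SA ((act n SA ^^ i) p)) then 1 else 0)"

lemma pow_snoc: "(act n SA ^^ k) (p @ [x]) = (act n SA ^^ k) p @ [if odd (cnt n k p) then \<not> x else x]"
proof (induction k)
  case 0
  then show ?case by (simp add: cnt_def)
next
  case (Suc k)
  show ?case using Suc by (simp add: act_snoc cnt_def)
qed

lemma snoc_ex: "length (w::bool list) = Suc m \<Longrightarrow> \<exists>p x. w = p @ [x] \<and> length p = m"
  by (cases w rule: rev_cases) auto

lemma level_Suc: "{q::bool list. length q = Suc m} = Cons False ` {q. length q = m} \<union> Cons True ` {q. length q = m}"
  by (auto simp: length_Suc_conv)

lemma finite_level: "finite {q::bool list. length q = m}"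
  using finite_lists_length_eq[of "UNIV::bool set" m] by simp

lemma card_level: "card {q::bool list. length q = m} = 2 ^ m"
  using card_lists_length_eq[of "UNIV::bool set" m] by simp

lemma sum_level: "(\<Sum>q\<in>{q::bool list. length q = m}. if swaps (stt n s q) then 1 else 0) = fc n m s"
proof (induction m arbitrary: s)
  case 0
  have "{q::bool list. length q = 0} = {[]}" by auto
  then show ?case by simp
next
  case (Suc m)
  have d: "Cons False ` {q::bool list. length q = m} \<inter> Cons True ` {q. length q = m} = {}" by auto
  show ?case
    apply (simp only: level_Suc)
    apply (subst sum.union_disjoint)
    using finite_level d apply auto[3]
    apply (subst sum.reindex, simp)+
    using Suc by (simp add: comp_def)
qed

lemma parity: "even (fc n m SC) \<and> odd (fc n m SB)"
  by (induction m) auto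

lemma odd_SA: "odd (fc n m SA)"
  using parity[of n] by (cases m) auto

lemma main:
  "\<forall>p. length p = m \<longrightarrow> (act n SA ^^ (2^m)) p = p \<and>
     (\<lambda>i. (act n SA ^^ i) p) ` {..<2^m} = {q. length q = m}"
proof (induction m)
  case 0
  then show ?case by auto
next
  case (Suc m)
  let ?g = "act n SA"
  show ?case
  proof (intro allI impI)
    fix w :: "bool list" assume lw: "length w = Suc m"
    obtain p x where w: "w = p @ [x]" and lp: "length p = m" using snoc_ex[OF lw] by blast
    have fix1: "(?g ^^ (2^m)) p = p" and im: "(\<lambda>i. (?g ^^ i) p) ` {..<2^m} = {q. length q = m}"
      using Suc lp by auto
    have inj: "inj_on (\<lambda>i. (?g ^^ i) p) {..<2^m}"
      by (rule eq_card_imp_inj_on) (auto simp: im card_level)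
    have "cnt n (2^m) p = (\<Sum>q\<in>{q::bool list. length q = m}. if swaps (stt n SA q) then 1 else 0)"
      unfolding cnt_def im[symmetric] by (subst sum.reindex[OF inj]) (simp add: comp_def)
    then have oc: "odd (cnt n (2^m) p)" using sum_level odd_SA by simp
    have half: "\<And>y. (?g ^^ (2^m)) (p @ [y]) = p @ [\<not> y]"
      using pow_snoc oc fix1 by simp
    have e: "(2::nat)^Suc m = 2^m + 2^m" by simp
    have "(?g ^^ (2^Suc m)) w = w"
      unfolding e funpow_add w using half by simp
    moreover have "(\<lambda>i. (?g ^^ i) w) ` {..<2^Suc m} = {q. length q = Suc m}"
    proof
      show "(\<lambda>i. (?g ^^ i) w) ` {..<2^Suc m} \<subseteq> {q. length q = Suc m}" using lw by auto
    next
      show "{q. length q = Suc m} \<subseteq> (\<lambda>i. (?g ^^ i) w) ` {..<2^Suc m}"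
      proof
        fix v :: "bool list" assume "v \<in> {q. length q = Suc m}"
        then obtain q y where v: "v = q @ [y]" and lq: "length q = m"
          using snoc_ex by blast
        have "q \<in> (\<lambda>i. (?g ^^ i) p) ` {..<2^m}" using im lq by blast
        then obtain j where j: "j < 2^m" "q = (?g ^^ j) p" by auto
        have a1: "(?g ^^ j) w = q @ [if odd (cnt n j p) then \<not> x else x]"
          using pow_snoc j w by simp
        have a2: "(?g ^^ (j + 2^m)) w = q @ [if odd (cnt n j p) then x else \<not> x]"
          using pow_snoc j w half by (simp add: funpow_add)
        have "j + 2^m < 2^Suc m" using j by simp
        moreover have "j < 2^Suc m" using j by simp
        ultimately show "v \<in> (\<lambda>i. (?g ^^ i) w) ` {..<2^Suc m}"
        proof (cases "y = (if odd (cnt n j p) then \<not> x else x)")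
          case True
          then have "v = (?g ^^ j) w" using a1 v by simp
          then show ?thesis using \<open>j < 2^Suc m\<close> by blast
        next
          case False
          then have "v = (?g ^^ (j + 2^m)) w" using a2 v by auto
          then show ?thesis using \<open>j + 2^m < 2^Suc m\<close> by blast
        qed
      qed
    qed
    ultimately show "(?g ^^ (2^Suc m)) w = w \<and>
      (\<lambda>i. (?g ^^ i) w) ` {..<2^Suc m} = {q. length q = Suc m}" by blast
  qed
qed

theorem mainTheorem6:
  fixes n :: nat
  assumes "n \<ge> 1"
  shows "\<forall>m u v. length u = m \<longrightarrow> length v = m \<longrightarrow>
           (\<exists>k::nat. (act n SA ^^ k) u = v)"
proof (intro allI impI)
  fix m u v assume "length (u::bool list) = (m::nat)" "length (v::bool list) = m"
  then have "v \<in> (\<lambda>i. (act n SA ^^ i) u) ` {..<2^m}" using main[of m n] by auto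
  then show "\<exists>k. (act n SA ^^ k) u = v" by auto
qed

end
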